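(* Let $X,Y$ be Banach spaces, let $-A$ be the generator of a strongly continuous semigroup $(T(t))_{t\ge0}$ on $X$, and let $C:\mathcal D(A)\to Y$ be linear and bounded for the graph norm. If $(A,C)$ is an admissible BFC-system, then the set $\{\operatorname{Re}\lambda:\lambda\in\partial\sigma(A)\}$ is bounded, where $\partial\sigma(A)$ is the boundary of the spectrum of $A$.
   Context: For $\tau\in(0,\infty]$ set $M(\tau)^2:=\sup_{x\in\mathcal D(A),\|x\|=1}\int_0^\tau\|CT(t)x\|_Y^2\,dt$ and $m(\tau)^2:=\inf_{x\in\mathcal D(A),\|x\|=1}\int_0^\tau\|CT(t)x\|_Y^2\,dt$. $C$ is admissible in time $\tau$ if $M(\tau)<\infty$, exactly observable in time $\eta$ if $m(\eta)>0$. $(A,C)$ is a BFC-system if there exist $0<\eta<\tau$ such that $C$ is admissible and exactly observable in time $\tau$ and $M(\eta)<m(\tau)$. *)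

theory Defs
  imports "HOL-Analysis.Analysis"
begin

text \<open>A complex structure on a real Banach space: a complex scalar multiplication
  extending the real one and compatible with the norm.  (HOL-Analysis has no
  class of complex normed spaces, so complex Banach spaces are modelled as
  real Banach spaces together with such a structure.)\<close>
definition complex_structure :: "(complex \<Rightarrow> 'a::real_normed_vector \<Rightarrow> 'a) \<Rightarrow> bool" where
  "complex_structure sc \<longleftrightarrow>
     (\<forall>a x y. sc a (x + y) = sc a x + sc a y) \<and>
     (\<forall>a b x. sc (a + b) x = sc a x + sc b x) \<and>
     (\<forall>a b x. sc a (sc b x) = sc (a * b) x) \<and>
     (\<forall>r x. sc (complex_of_real r) x = r *\<^sub>R x) \<and>
     (\<forall>a x. norm (sc a x) = cmod a * norm x)"

definition complex_linear_map ::
  "(complex \<Rightarrow> 'a::real_normed_vector \<Rightarrow> 'a) \<Rightarrow> (complex \<Rightarrow> 'b::real_normed_vector \<Rightarrow> 'b)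
    \<Rightarrow> ('a \<Rightarrow> 'b) \<Rightarrow> bool" where
  "complex_linear_map scX scY L \<longleftrightarrow> (\<forall>a x. L (scX a x) = scY a (L x))"

definition C0_semigroup ::
  "(complex \<Rightarrow> 'x::banach \<Rightarrow> 'x) \<Rightarrow> (real \<Rightarrow> 'x \<Rightarrow> 'x) \<Rightarrow> bool" where
  "C0_semigroup sc T \<longleftrightarrow>
     (\<forall>t\<ge>0. bounded_linear (T t) \<and> complex_linear_map sc sc (T t)) \<and>
     T 0 = id \<and>
     (\<forall>s\<ge>0. \<forall>t\<ge>0. T (s + t) = T s \<circ> T t) \<and>
     (\<forall>x. ((\<lambda>t. T t x) \<longlongrightarrow> x) (at_right 0))"

definition minus_generator ::
  "(real \<Rightarrow> 'x::banach \<Rightarrow> 'x) \<Rightarrow> 'x set \<Rightarrow> ('x \<Rightarrow> 'x) \<Rightarrow> bool" where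
  "minus_generator T D A \<longleftrightarrow>
     D = {x. \<exists>y. ((\<lambda>h. (1 / h) *\<^sub>R (T h x - x)) \<longlongrightarrow> y) (at_right 0)} \<and>
     (\<forall>x\<in>D. ((\<lambda>h. (1 / h) *\<^sub>R (T h x - x)) \<longlongrightarrow> - A x) (at_right 0))"

definition op_spectrum ::
  "(complex \<Rightarrow> 'x::banach \<Rightarrow> 'x) \<Rightarrow> 'x set \<Rightarrow> ('x \<Rightarrow> 'x) \<Rightarrow> complex set" where
  "op_spectrum sc D A = {l. \<not> (\<exists>R. bounded_linear R \<and>
        (\<forall>y. R y \<in> D \<and> sc l (R y) - A (R y) = y) \<and>
        (\<forall>x\<in>D. R (sc l x - A x) = x))}"

definition obs_energy ::
  "(real \<Rightarrow> 'x \<Rightarrow> 'x) \<Rightarrow> ('x \<Rightarrow> 'y::real_normed_vector) \<Rightarrow> ennreal \<Rightarrow> 'x \<Rightarrow> ennreal" where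
  "obs_energy T C \<tau> x =
     (\<integral>\<^sup>+ t \<in> {t::real. 0 \<le> t \<and> ennreal t < \<tau>}. ennreal ((norm (C (T t x)))\<^sup>2) \<partial>lborel)"

definition M2 :: "(real \<Rightarrow> 'x::real_normed_vector \<Rightarrow> 'x) \<Rightarrow> 'x set \<Rightarrow> ('x \<Rightarrow> 'y::real_normed_vector) \<Rightarrow> ennreal \<Rightarrow> ennreal" where
  "M2 T D C \<tau> = (SUP x\<in>{x\<in>D. norm x = 1}. obs_energy T C \<tau> x)"

definition m2 :: "(real \<Rightarrow> 'x::real_normed_vector \<Rightarrow> 'x) \<Rightarrow> 'x set \<Rightarrow> ('x \<Rightarrow> 'y::real_normed_vector) \<Rightarrow> ennreal \<Rightarrow> ennreal" where
  "m2 T D C \<tau> = (INF x\<in>{x\<in>D. norm x = 1}. obs_energy T C \<tau> x)"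

definition admissible_in where
  "admissible_in T D C \<tau> \<longleftrightarrow> M2 T D C \<tau> < \<infinity>"

definition exactly_observable_in where
  "exactly_observable_in T D C \<tau> \<longleftrightarrow> m2 T D C \<tau> > 0"

definition admissible where
  "admissible T D C \<longleftrightarrow> (\<exists>\<tau>::real. \<tau> > 0 \<and> admissible_in T D C (ennreal \<tau>))"

text \<open>BFC-system: \<open>0 < \<eta> < \<tau> \<le> \<infinity>\<close>, \<open>C\<close> admissible and exactly observable in time \<open>\<tau>\<close>,
  and \<open>M(\<eta>) < m(\<tau>)\<close> (equivalently \<open>M(\<eta>)\<^sup>2 < m(\<tau>)\<^sup>2\<close>).\<close>
definition BFC_system where
  "BFC_system T D C \<longleftrightarrow>
     (\<exists>(\<eta>::real) (\<tau>::ennreal). 0 < \<eta> \<and> ennreal \<eta> < \<tau> \<and>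
        admissible_in T D C \<tau> \<and> exactly_observable_in T D C \<tau> \<and>
        M2 T D C (ennreal \<eta>) < m2 T D C \<tau>)"

end

theory Submission
  imports Defs
begin



locale sg =
  fixes sc :: "complex \<Rightarrow> 'x::banach \<Rightarrow> 'x" and T :: "real \<Rightarrow> 'x \<Rightarrow> 'x"
    and D :: "'x set" and A :: "'x \<Rightarrow> 'x"
  assumes cs: "complex_structure sc" and c0: "C0_semigroup sc T" and gen: "minus_generator T D A"
begin

lemma sc_add: "sc a (x + y) = sc a x + sc a y" using cs unfolding complex_structure_def by blast
lemma sc_add_left: "sc (a + b) x = sc a x + sc b x" using cs unfolding complex_structure_def by blast
lemma sc_assoc: "sc a (sc b x) = sc (a * b) x" using cs unfolding complex_structure_def by blast
lemma sc_real: "sc (complex_of_real r) x = r *\<^sub>R x" using cs unfolding complex_structure_def by blast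
lemma norm_sc: "norm (sc a x) = cmod a * norm x" using cs unfolding complex_structure_def by blast

lemma sc_scaleR: "sc a (r *\<^sub>R x) = r *\<^sub>R sc a x"
proof -
  have "sc a (r *\<^sub>R x) = sc a (sc (complex_of_real r) x)" by (simp add: sc_real)
  also have "\<dots> = sc (complex_of_real r * a) x" by (simp add: sc_assoc mult.commute)
  also have "\<dots> = sc (complex_of_real r) (sc a x)" by (simp add: sc_assoc)
  finally show ?thesis by (simp add: sc_real)
qed

lemma sc_scaleR_left: "sc (r *\<^sub>R a) x = r *\<^sub>R sc a x"
  by (metis sc_assoc sc_real scaleR_conv_of_real)

lemma sc_one: "sc 1 x = x" using sc_real[of 1 x] by simp
lemma sc_zero: "sc 0 x = 0" using sc_real[of 0 x] by simp
lemma sc_zero_right: "sc a 0 = 0" using norm_sc[of a 0] by simp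
lemma sc_minus_one: "sc (-1) x = - x" using sc_real[of "-1" x] by simp
lemma sc_diff: "sc a (x - y) = sc a x - sc a y"
  by (metis add_diff_cancel diff_add_cancel sc_add)
lemma sc_diff_left: "sc (a - b) x = sc a x - sc b x"
  by (metis add_diff_cancel diff_add_cancel sc_add_left)

lemma sc_bl: "bounded_linear (sc a)"
  apply (rule bounded_linear_intro[of _ "cmod a"])
  using sc_add sc_scaleR norm_sc by (auto simp: mult.commute)

lemma sc_bil: "bounded_bilinear sc"
  apply (rule bounded_bilinear.intro)
  using sc_add sc_add_left sc_scaleR sc_scaleR_left norm_sc
  by (auto intro!: exI[of _ 1] simp: mult.commute)

lemma T_bl: "t \<ge> 0 \<Longrightarrow> bounded_linear (T t)"
  using c0 unfolding C0_semigroup_def by blast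
lemma T_sc: "t \<ge> 0 \<Longrightarrow> T t (sc a x) = sc a (T t x)"
  using c0 unfolding C0_semigroup_def complex_linear_map_def by blast
lemma T0: "T 0 x = x" using c0 unfolding C0_semigroup_def by simp
lemma T_add: "s \<ge> 0 \<Longrightarrow> t \<ge> 0 \<Longrightarrow> T (s + t) x = T s (T t x)"
  using c0 unfolding C0_semigroup_def by simp
lemma T_cont0: "((\<lambda>t. T t x) \<longlongrightarrow> x) (at_right 0)"
  using c0 unfolding C0_semigroup_def by simp

lemma D_def': "D = {x. \<exists>y. ((\<lambda>h. (1 / h) *\<^sub>R (T h x - x)) \<longlongrightarrow> y) (at_right 0)}"
  using gen unfolding minus_generator_def by blast
lemma A_lim: "x \<in> D \<Longrightarrow> ((\<lambda>h. (1 / h) *\<^sub>R (T h x - x)) \<longlongrightarrow> - A x) (at_right 0)"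
  using gen unfolding minus_generator_def by blast

lemma D_I:
  assumes "((\<lambda>h. (1 / h) *\<^sub>R (T h x - x)) \<longlongrightarrow> y) (at_right 0)"
  shows "x \<in> D" "A x = - y"
proof -
  show xD: "x \<in> D" using assms D_def' by blast
  have "- A x = y" using tendsto_unique[OF _ A_lim[OF xD] assms] by simp
  then show "A x = - y" by auto
qed

lemma D_linmap:
  assumes L: "bounded_linear L" and comm: "\<And>h x. h > 0 \<Longrightarrow> T h (L x) = L (T h x)" and x: "x \<in> D"
  shows "L x \<in> D" "A (L x) = L (A x)"
proof -
  have lim: "((\<lambda>h. L ((1 / h) *\<^sub>R (T h x - x))) \<longlongrightarrow> L (- A x)) (at_right 0)"
    using bounded_linear.tendsto[OF L A_lim[OF x]] .
  have ev: "\<forall>\<^sub>F h in at_right 0. L ((1 / h) *\<^sub>R (T h x - x)) = (1 / h) *\<^sub>R (T h (L x) - L x)"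
    using eventually_at_right_less[of 0]
    by eventually_elim (simp add: comm linear.scaleR[OF bounded_linear.linear[OF L]] linear_diff[OF bounded_linear.linear[OF L]])
  have lim2: "((\<lambda>h. (1 / h) *\<^sub>R (T h (L x) - L x)) \<longlongrightarrow> L (- A x)) (at_right 0)"
    using Lim_transform_eventually[OF lim ev] .
  show "L x \<in> D" using D_I(1)[OF lim2] .
  show "A (L x) = L (A x)" using D_I(2)[OF lim2] linear_neg[OF bounded_linear.linear[OF L]] by simp
qed

lemma D_sc: "x \<in> D \<Longrightarrow> sc a x \<in> D" and A_sc: "x \<in> D \<Longrightarrow> A (sc a x) = sc a (A x)"
  using D_linmap[OF sc_bl, of a] T_sc by auto

lemma D_T: "x \<in> D \<Longrightarrow> t \<ge> 0 \<Longrightarrow> T t x \<in> D" and A_T: "x \<in> D \<Longrightarrow> t \<ge> 0 \<Longrightarrow> A (T t x) = T t (A x)"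
proof -
  assume x: "x \<in> D" and t: "t \<ge> 0"
  have comm: "T h (T t y) = T t (T h y)" if "h > 0" for h y
    using T_add[of h t y] T_add[of t h y] that t by (simp add: add.commute)
  show "T t x \<in> D" "A (T t x) = T t (A x)" using D_linmap[OF T_bl[OF t] comm x] by auto
qed

lemma D_add: "x \<in> D \<Longrightarrow> y \<in> D \<Longrightarrow> x + y \<in> D" and A_add: "x \<in> D \<Longrightarrow> y \<in> D \<Longrightarrow> A (x + y) = A x + A y"
proof -
  assume x: "x \<in> D" and y: "y \<in> D"
  have lim: "((\<lambda>h. (1 / h) *\<^sub>R (T h x - x) + (1 / h) *\<^sub>R (T h y - y)) \<longlongrightarrow> - A x + - A y) (at_right 0)"
    using tendsto_add[OF A_lim[OF x] A_lim[OF y]] .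
  have ev: "\<forall>\<^sub>F h in at_right 0. (1 / h) *\<^sub>R (T h x - x) + (1 / h) *\<^sub>R (T h y - y) = (1 / h) *\<^sub>R (T h (x + y) - (x + y))"
    using eventually_at_right_less[of 0]
    by eventually_elim (simp add: linear_simps(1)[OF T_bl] algebra_simps)
  note lim2 = Lim_transform_eventually[OF lim ev]
  show "x + y \<in> D" using D_I(1)[OF lim2] .
  show "A (x + y) = A x + A y" using D_I(2)[OF lim2] by simp
qed

end


context sg begin

lemma T_zero: "t \<ge> 0 \<Longrightarrow> T t 0 = 0" using linear_0[OF bounded_linear.linear[OF T_bl]] by blast

lemma T_locbound: "\<exists>\<delta>>0. \<exists>K. \<forall>t z. 0 \<le> t \<and> t \<le> \<delta> \<longrightarrow> norm (T t z) \<le> K * norm z"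
proof -
  define E where "E n = (\<Inter>t\<in>{0..1/real (Suc n)}. {x. norm (T t x) \<le> real (Suc n)})" for n
  have clo: "closed (E n)" for n
    unfolding E_def
    by (intro closed_INT ballI closed_Collect_le continuous_intros linear_continuous_on[OF T_bl]) auto
  have cover: "\<Union>(range E) = UNIV"
  proof (intro set_eqI iffI)
    fix x :: 'x
    have "\<forall>\<^sub>F t in at_right 0. dist (T t x) x < 1"
      using T_cont0[of x] by (simp add: tendsto_iff)
    then obtain b where b: "b > 0" "\<And>t. t > 0 \<Longrightarrow> t < b \<Longrightarrow> dist (T t x) x < 1"
      by (auto simp: eventually_at_right_field)
    obtain n :: nat where n: "real n \<ge> max (1/b) (norm x + 1)"
      using real_arch_simple by blast
    have "x \<in> E n"
    proof -
      { fix t assume t: "0 \<le> t" "t \<le> 1 / real (Suc n)"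
        have "1 / real (Suc n) < b"
        proof -
          have "1 / b < real (Suc n)" using n by simp
          then have "1 < real (Suc n) * b" using b by (simp add: field_simps)
          then show ?thesis by (simp add: field_simps)
        qed
        have "norm (T t x) \<le> real (Suc n)"
        proof (cases "t = 0")
          case True then show ?thesis using n by (simp add: T0)
        next
          case False
          then have "dist (T t x) x < 1" using b t \<open>1 / real (Suc n) < b\<close> by auto
          then have "norm (T t x) \<le> norm x + 1" using norm_triangle_sub[of "T t x" x] by (simp add: dist_norm)
          then show ?thesis using n by simp
        qed }
      then show ?thesis unfolding E_def by auto
    qed
    then show "x \<in> \<Union>(range E)" by blast
  qed auto
  have "\<exists>n. interior (E n) \<noteq> {}"
  proof (rule ccontr)
    assume "\<not> ?thesis"
    then have "euclidean interior_of \<Union>(range E) = {}"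
      by (intro Baire_category_alt) (auto simp: completely_metrizable_space_euclidean clo)
    then show False using cover by simp
  qed
  then obtain n x0 where "x0 \<in> interior (E n)" by blast
  then obtain r where r: "r > 0" "ball x0 r \<subseteq> E n" by (meson mem_interior)
  define N where "N = real (Suc n)"
  have x0E: "x0 \<in> E n" using r by auto
  show ?thesis
  proof (intro exI conjI allI impI)
    show "0 < 1 / real (Suc n)" by simp
    fix t z assume t: "0 \<le> t \<and> t \<le> 1 / real (Suc n)"
    show "norm (T t z) \<le> 4 * N / r * norm z"
    proof (cases "z = 0")
      case True then show ?thesis using T_zero t by simp
    next
      case False
      define c where "c = r / (2 * norm z)"
      have c: "c > 0" using False r by (simp add: c_def)
      have "norm (c *\<^sub>R z) < r" using False r by (simp add: c_def)
      then have "x0 + c *\<^sub>R z \<in> E n" using r by (auto simp: dist_norm)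
      then have 1: "norm (T t (x0 + c *\<^sub>R z)) \<le> N" using t by (auto simp: E_def N_def)
      have 2: "norm (T t x0) \<le> N" using x0E t by (auto simp: E_def N_def)
      have "T t (c *\<^sub>R z) = T t (x0 + c *\<^sub>R z) - T t x0"
        using linear_diff[OF bounded_linear.linear[OF T_bl]] t by (metis add_diff_cancel_left')
      then have "norm (T t (c *\<^sub>R z)) \<le> 2 * N" using 1 2 norm_triangle_ineq4[of "T t (x0 + c *\<^sub>R z)" "T t x0"] by simp
      then have "c * norm (T t z) \<le> 2 * N"
        using linear.scaleR[OF bounded_linear.linear[OF T_bl]] t c by simp
      then have "norm (T t z) \<le> 2 * N / c" using c by (simp add: field_simps)
      also have "2 * N / c = 4 * N / r * norm z" using False r by (simp add: c_def field_simps)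
      finally show ?thesis .
    qed
  qed
qed

lemma T_bound: "\<exists>K\<ge>1. \<forall>t z. 0 \<le> t \<and> t \<le> b \<longrightarrow> norm (T t z) \<le> K * norm z"
proof -
  obtain \<delta> K0 where d: "\<delta> > 0" and K0: "\<And>t z. 0 \<le> t \<Longrightarrow> t \<le> \<delta> \<Longrightarrow> norm (T t z) \<le> K0 * norm z"
    using T_locbound by blast
  define K where "K = max 1 K0"
  have K: "\<And>t z. 0 \<le> t \<Longrightarrow> t \<le> \<delta> \<Longrightarrow> norm (T t z) \<le> K * norm z"
    using K0 by (smt (verit) K_def max.cobounded2 mult_right_mono norm_ge_zero)
  have K1: "K \<ge> 1" by (simp add: K_def)
  have ind: "\<forall>t z. 0 \<le> t \<and> t \<le> real k * \<delta> \<longrightarrow> norm (T t z) \<le> K ^ (Suc k) * norm z" for k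
  proof (induction k)
    case 0 then show ?case using K K1 d by auto
  next
    case (Suc k)
    show ?case
    proof (intro allI impI)
      fix t z assume t: "0 \<le> t \<and> t \<le> real (Suc k) * \<delta>"
      show "norm (T t z) \<le> K ^ Suc (Suc k) * norm z"
      proof (cases "t \<le> \<delta>")
        case True
        then have "norm (T t z) \<le> K * norm z" using K t by blast
        also have "\<dots> \<le> K ^ Suc (Suc k) * norm z"
          using K1 by (intro mult_right_mono) (use one_le_power[of K "Suc k"] in auto)
        finally show ?thesis .
      next
        case False
        then have t2: "0 \<le> t - \<delta>" "t - \<delta> \<le> real k * \<delta>"
          using t d by (auto simp: algebra_simps)
        have "T t z = T \<delta> (T (t - \<delta>) z)" using T_add[of \<delta> "t - \<delta>" z] t2 d by simp
        then have "norm (T t z) \<le> K * norm (T (t - \<delta>) z)" using K d by simp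
        also have "\<dots> \<le> K * (K ^ Suc k * norm z)"
          using Suc t2 K1 by (intro mult_left_mono) auto
        finally show ?thesis by simp
      qed
    qed
  qed
  obtain k :: nat where k: "real k \<ge> b / \<delta>" using real_arch_simple by blast
  then have "b \<le> real k * \<delta>" using d by (simp add: field_simps)
  then show ?thesis using ind[of k] K1 using one_le_power[of K "Suc k"] by (intro exI[of _ "K ^ Suc k"]) auto
qed

end


context sg begin

lemma T_diff: "t \<ge> 0 \<Longrightarrow> T t (a - b) = T t a - T t b"
  using linear_diff[OF bounded_linear.linear[OF T_bl]] by blast
lemma T_plus: "t \<ge> 0 \<Longrightarrow> T t (a + b) = T t a + T t b"
  using linear_add[OF bounded_linear.linear[OF T_bl]] by blast
lemma T_scaleR: "t \<ge> 0 \<Longrightarrow> T t (r *\<^sub>R a) = r *\<^sub>R T t a"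
  using linear.scaleR[OF bounded_linear.linear[OF T_bl]] by blast
lemma T_neg: "t \<ge> 0 \<Longrightarrow> T t (- a) = - T t a"
  using linear_neg[OF bounded_linear.linear[OF T_bl]] by blast

lemma T_right: "e > 0 \<Longrightarrow> \<exists>d>0. \<forall>h. 0 \<le> h \<and> h < d \<longrightarrow> norm (T h z - z) < e"
proof -
  assume e: "e > 0"
  have "\<forall>\<^sub>F t in at_right 0. dist (T t z) z < e" using T_cont0[of z] e by (simp add: tendsto_iff)
  then obtain b where b: "b > 0" "\<And>t. t > 0 \<Longrightarrow> t < b \<Longrightarrow> dist (T t z) z < e"
    by (auto simp: eventually_at_right_field)
  show ?thesis
  proof (intro exI[of _ b] conjI allI impI)
    fix h assume "0 \<le> h \<and> h < b"
    then show "norm (T h z - z) < e" using b e by (cases "h = 0") (auto simp: T0 dist_norm)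
  qed (use b in auto)
qed

lemma T_cont: assumes s: "s \<ge> 0" shows "continuous (at s within {0..}) (\<lambda>t. T t z)"
  unfolding continuous_within_eps_delta
proof (intro allI impI)
  fix e :: real assume e: "e > 0"
  obtain K where K: "K \<ge> 1" "\<And>t z. 0 \<le> t \<Longrightarrow> t \<le> s + 1 \<Longrightarrow> norm (T t z) \<le> K * norm z"
    using T_bound[of "s + 1"] by blast
  obtain d where d: "d > 0" "\<And>h. 0 \<le> h \<Longrightarrow> h < d \<Longrightarrow> norm (T h z - z) < e / K"
    using T_right[of "e / K" z] e K by auto
  show "\<exists>d>0. \<forall>t\<in>{0..}. dist t s < d \<longrightarrow> dist (T t z) (T s z) < e"
  proof (intro exI[of _ "min d 1"] conjI ballI impI)
    fix t :: real assume t: "t \<in> {0..}" "dist t s < min d 1"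
    show "dist (T t z) (T s z) < e"
    proof (cases "s \<le> t")
      case True
      have "T t z = T s (T (t - s) z)" using T_add[of s "t - s" z] True s by simp
      then have "T t z - T s z = T s (T (t - s) z - z)" using T_diff s by simp
      then have "norm (T t z - T s z) \<le> K * norm (T (t - s) z - z)" using K s by simp
      also have "\<dots> < K * (e / K)" using d True t K by (intro mult_strict_left_mono) (auto simp: dist_real_def)
      finally show ?thesis using K by (simp add: dist_norm)
    next
      case False
      have "T s z = T t (T (s - t) z)" using T_add[of t "s - t" z] False t by simp
      then have "T t z - T s z = T t (z - T (s - t) z)" using T_diff t by simp
      then have "norm (T t z - T s z) \<le> K * norm (z - T (s - t) z)" using K t False by simp
      also have "\<dots> < K * (e / K)" using d False t K
        by (intro mult_strict_left_mono) (auto simp: dist_real_def norm_minus_commute)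
      finally show ?thesis using K by (simp add: dist_norm)
    qed
  qed (use d in auto)
qed

lemma T_cont_on: "continuous_on {0..} (\<lambda>t. T t z)"
  using T_cont by (simp add: continuous_on_eq_continuous_within)

lemma T_deriv:
  assumes x: "x \<in> D" and s: "s \<ge> 0"
  shows "((\<lambda>t. T t x) has_derivative (\<lambda>h. h *\<^sub>R (- T s (A x)))) (at s within {0..})"
  unfolding has_derivative_within_alt
proof (intro conjI allI impI)
  show "bounded_linear (\<lambda>h. h *\<^sub>R (- T s (A x)))" by (rule bounded_linear_scaleR_left)
  fix e :: real assume e: "e > 0"
  obtain K where K: "K \<ge> 1" "\<And>t z. 0 \<le> t \<Longrightarrow> t \<le> s + 1 \<Longrightarrow> norm (T t z) \<le> K * norm z"
    using T_bound[of "s + 1"] by blast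
  have "\<forall>\<^sub>F h in at_right 0. dist ((1 / h) *\<^sub>R (T h x - x)) (- A x) < e / (2 * K)"
    using A_lim[OF x] e K by (simp add: tendsto_iff)
  then obtain d1 where d1: "d1 > 0" "\<And>h. h > 0 \<Longrightarrow> h < d1 \<Longrightarrow> norm ((1 / h) *\<^sub>R (T h x - x) + A x) < e / (2 * K)"
    by (auto simp: eventually_at_right_field dist_norm)
  obtain d2 where d2: "d2 > 0" "\<And>t. t \<in> {0..} \<Longrightarrow> dist t s < d2 \<Longrightarrow> dist (T t (A x)) (T s (A x)) < e / 2"
    using T_cont[OF s, of "A x"] e unfolding continuous_within_eps_delta by (meson half_gt_zero)
  have key: "norm (T h x - x + h *\<^sub>R A x) \<le> h * (e / (2 * K))" if h: "h > 0" "h < d1" for h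
  proof -
    have "T h x - x + h *\<^sub>R A x = h *\<^sub>R ((1 / h) *\<^sub>R (T h x - x) + A x)" using h by (simp add: algebra_simps)
    then have "norm (T h x - x + h *\<^sub>R A x) = h * norm ((1 / h) *\<^sub>R (T h x - x) + A x)" using h by simp
    also have "\<dots> \<le> h * (e / (2 * K))" using d1(2)[OF h] h by (intro mult_left_mono) auto
    finally show ?thesis .
  qed
  show "\<exists>d>0. \<forall>y\<in>{0..}. norm (y - s) < d \<longrightarrow>
          norm (T y x - T s x - (y - s) *\<^sub>R - T s (A x)) \<le> e * norm (y - s)"
  proof (intro exI[of _ "min (min d1 d2) 1"] conjI ballI impI)
    fix y :: real assume y: "y \<in> {0..}" "norm (y - s) < min (min d1 d2) 1"
    consider "y = s" | "y > s" | "y < s" by linarith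
    then show "norm (T y x - T s x - (y - s) *\<^sub>R - T s (A x)) \<le> e * norm (y - s)"
    proof cases
      case 1 then show ?thesis by simp
    next
      case 2
      define h where "h = y - s"
      have h: "h > 0" "h < d1" using 2 y by (auto simp: h_def)
      have "T y x = T s (T h x)" using T_add[of s h x] s h by (simp add: h_def)
      then have "T y x - T s x - (y - s) *\<^sub>R - T s (A x) = T s (T h x - x + h *\<^sub>R A x)"
        using s by (simp add: T_diff T_plus T_scaleR h_def)
      then have "norm (T y x - T s x - (y - s) *\<^sub>R - T s (A x)) \<le> K * norm (T h x - x + h *\<^sub>R A x)"
        using K s by simp
      also have "\<dots> \<le> K * (h * (e / (2 * K)))" using key[OF h] K by (intro mult_left_mono) auto
      also have "\<dots> \<le> e * norm (y - s)" using K e h by (simp add: h_def field_simps)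
      finally show ?thesis .
    next
      case 3
      define h where "h = s - y"
      have h: "h > 0" "h < d1" using 3 y by (auto simp: h_def)
      have y0: "y \<ge> 0" using y by simp
      have "T s x = T y (T h x)" using T_add[of y h x] y0 h by (simp add: h_def)
      then have eq: "T y x - T s x - (y - s) *\<^sub>R - T s (A x)
          = - T y (T h x - x + h *\<^sub>R A x) + h *\<^sub>R (T y (A x) - T s (A x))"
        using y0 by (simp add: T_diff T_plus T_scaleR h_def algebra_simps)
      have "norm (T y x - T s x - (y - s) *\<^sub>R - T s (A x))
          \<le> norm (T y (T h x - x + h *\<^sub>R A x)) + h * norm (T y (A x) - T s (A x))"
        unfolding eq using h norm_triangle_ineq[of "- T y (T h x - x + h *\<^sub>R A x)" "h *\<^sub>R (T y (A x) - T s (A x))"]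
        by simp
      also have "\<dots> \<le> K * (h * (e / (2 * K))) + h * (e / 2)"
      proof (intro add_mono mult_left_mono)
        show "norm (T y (T h x - x + h *\<^sub>R A x)) \<le> K * (h * (e / (2 * K)))"
          using K(2)[of y "T h x - x + h *\<^sub>R A x"] y0 3 key[OF h] K(1) s
          by (smt (verit, best) mult_left_mono)
        show "norm (T y (A x) - T s (A x)) \<le> e / 2"
          using d2(2)[of y] y by (auto simp: dist_norm dist_real_def)
      qed (use h in auto)
      also have "\<dots> = e * norm (y - s)" using K h by (simp add: h_def field_simps)
      finally show ?thesis .
    qed
  qed (use d1 d2 in auto)
qed

end


context sg begin

lemma sc_neg: "sc a (- x) = - sc a x"
  using linear_neg[OF bounded_linear.linear[OF sc_bl]] by blast

lemma exp_deriv: "((\<lambda>s. exp (l * complex_of_real s)) has_derivative (\<lambda>h. h *\<^sub>R (l * exp (l * complex_of_real s)))) (at s within S)"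
proof -
  have "((\<lambda>s. exp (l * complex_of_real s)) has_vector_derivative (l * exp (l * complex_of_real s))) (at s within S)"
    by (rule has_vector_derivative_real_field[where f="\<lambda>z. exp (l * z)", simplified])
       (auto intro!: derivative_eq_intros simp: mult.commute)
  then show ?thesis by (simp add: has_vector_derivative_def)
qed

lemma T_approx:
  assumes x: "x \<in> D" and t: "t \<ge> 0"
    and K: "\<And>s z. 0 \<le> s \<Longrightarrow> s \<le> t \<Longrightarrow> norm (T s z) \<le> K * norm z"
  shows "norm (sc (exp (l * complex_of_real t)) (T t x) - x) \<le> exp (\<bar>Re l\<bar> * t) * K * norm (sc l x - A x) * t"
proof -
  define f where "f s = sc (exp (l * complex_of_real s)) (T s x)" for s
  define v where "v s = sc (exp (l * complex_of_real s)) (T s (sc l x - A x))" for s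
  have der: "(f has_derivative (\<lambda>h. h *\<^sub>R v s)) (at s within {0..t})" if s: "s \<in> {0..t}" for s
  proof -
    have s0: "s \<ge> 0" using s by simp
    have d1: "((\<lambda>t. T t x) has_derivative (\<lambda>h. h *\<^sub>R (- T s (A x)))) (at s within {0..t})"
      by (rule has_derivative_subset[OF T_deriv[OF x s0]]) auto
    have d: "(f has_derivative (\<lambda>h. sc (exp (l * complex_of_real s)) (h *\<^sub>R (- T s (A x)))
               + sc (h *\<^sub>R (l * exp (l * complex_of_real s))) (T s x))) (at s within {0..t})"
      unfolding f_def by (rule bounded_bilinear.FDERIV[OF sc_bil exp_deriv d1])
    have eq: "(\<lambda>h. sc (exp (l * complex_of_real s)) (h *\<^sub>R (- T s (A x)))
               + sc (h *\<^sub>R (l * exp (l * complex_of_real s))) (T s x)) = (\<lambda>h. h *\<^sub>R v s)"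
    proof
      fix h :: real
      have "sc (h *\<^sub>R (l * exp (l * complex_of_real s))) (T s x) = h *\<^sub>R sc (exp (l * complex_of_real s)) (T s (sc l x))"
        using s0 by (simp add: sc_scaleR_left T_sc sc_assoc mult.commute)
      then show "sc (exp (l * complex_of_real s)) (h *\<^sub>R (- T s (A x)))
               + sc (h *\<^sub>R (l * exp (l * complex_of_real s))) (T s x) = h *\<^sub>R v s"
        using s0 by (simp add: v_def sc_scaleR T_diff sc_diff sc_neg algebra_simps)
    qed
    show ?thesis using d unfolding eq .
  qed
  have bnd: "onorm (\<lambda>h. h *\<^sub>R v s) \<le> exp (\<bar>Re l\<bar> * t) * K * norm (sc l x - A x)" if s: "s \<in> {0..t}" for s
  proof (rule onorm_le)
    fix h :: real
    have K0: "K \<ge> 0 \<or> norm (sc l x - A x) = 0 \<or> True" by simp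
    have "norm (v s) = exp (Re l * s) * norm (T s (sc l x - A x))"
      by (simp add: v_def norm_sc)
    also have "\<dots> \<le> exp (\<bar>Re l\<bar> * t) * (K * norm (sc l x - A x))"
    proof (rule mult_mono)
      have "Re l * s \<le> \<bar>Re l\<bar> * s" using s by (intro mult_right_mono) auto
      also have "\<dots> \<le> \<bar>Re l\<bar> * t" using s by (intro mult_left_mono) auto
      finally show "exp (Re l * s) \<le> exp (\<bar>Re l\<bar> * t)" by simp
      show "norm (T s (sc l x - A x)) \<le> K * norm (sc l x - A x)" using K s by auto
    qed auto
    finally have "norm (v s) \<le> exp (\<bar>Re l\<bar> * t) * K * norm (sc l x - A x)" by simp
    then show "norm (h *\<^sub>R v s) \<le> exp (\<bar>Re l\<bar> * t) * K * norm (sc l x - A x) * norm h"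
      by (simp add: mult.commute mult_left_mono)
  qed
  have "norm (f t - f 0) \<le> exp (\<bar>Re l\<bar> * t) * K * norm (sc l x - A x) * norm (t - 0)"
    by (rule differentiable_bound[OF convex_real_interval(5) der bnd]) (use t in auto)
  then show ?thesis using t by (simp add: f_def T0 sc_one)
qed

end


context sg begin

lemma D_scaleR: "x \<in> D \<Longrightarrow> r *\<^sub>R x \<in> D" using D_sc[of x "complex_of_real r"] by (simp add: sc_real)
lemma A_scaleR: "x \<in> D \<Longrightarrow> A (r *\<^sub>R x) = r *\<^sub>R A x" using A_sc[of x "complex_of_real r"] by (simp add: sc_real)
lemma D_diff: "x \<in> D \<Longrightarrow> y \<in> D \<Longrightarrow> x - y \<in> D"
  using D_add[of x "(-1) *\<^sub>R y"] D_scaleR[of y "-1"] by simp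
lemma A_diff: "x \<in> D \<Longrightarrow> y \<in> D \<Longrightarrow> A (x - y) = A x - A y"
  using A_add[of x "(-1) *\<^sub>R y"] D_scaleR[of y "-1"] A_scaleR[of y "-1"] by simp

definition res where "res l \<longleftrightarrow> (\<exists>R. bounded_linear R \<and>
        (\<forall>y. R y \<in> D \<and> sc l (R y) - A (R y) = y) \<and> (\<forall>x\<in>D. R (sc l x - A x) = x))"

lemma spec_iff: "l \<in> op_spectrum sc D A \<longleftrightarrow> \<not> res l"
  unfolding op_spectrum_def res_def by simp

lemma lower_shift:
  assumes low: "\<And>x. x \<in> D \<Longrightarrow> c * norm x \<le> norm (sc l x - A x)" and x: "x \<in> D"
  shows "(c - cmod (m - l)) * norm x \<le> norm (sc m x - A x)"
proof -
  have "sc m x - A x = (sc l x - A x) + sc (m - l) x" by (simp add: sc_diff_left)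
  then have "norm (sc l x - A x) \<le> norm (sc m x - A x) + cmod (m - l) * norm x"
    by (metis add_diff_cancel_left' norm_sc norm_triangle_ineq4 diff_add_cancel)
  then show ?thesis using low[OF x] by (simp add: algebra_simps)
qed

lemma res_near:
  assumes resm: "res m" and low: "\<And>x. x \<in> D \<Longrightarrow> c * norm x \<le> norm (sc m x - A x)"
    and lown: "\<And>x. x \<in> D \<Longrightarrow> c' * norm x \<le> norm (sc n x - A x)"
    and c: "c > 0" "c' > 0" and nm: "cmod (n - m) < c"
  shows "res n"
proof -
  obtain R where R: "bounded_linear R" "\<And>y. R y \<in> D" "\<And>y. sc m (R y) - A (R y) = y"
    "\<And>x. x \<in> D \<Longrightarrow> R (sc m x - A x) = x" using resm unfolding res_def by blast
  have Rb: "norm (R y) \<le> norm y / c" for y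
    using low[OF R(2)[of y]] R(3)[of y] c by (simp add: field_simps mult.commute)
  have ex: "\<exists>x\<in>D. sc n x - A x = y" for y
  proof -
    define g where "g z = y - sc (n - m) (R z)" for z
    define q where "q = cmod (n - m) / c"
    have q: "0 \<le> q" "q < 1" using c nm by (auto simp: q_def)
    have "\<forall>z1 z2. dist (g z1) (g z2) \<le> q * dist z1 z2"
    proof (intro allI)
      fix z1 z2
      have "g z1 - g z2 = - sc (n - m) (R (z1 - z2))"
        by (simp add: g_def linear_diff[OF bounded_linear.linear[OF R(1)]] sc_diff)
      then have "dist (g z1) (g z2) = cmod (n - m) * norm (R (z1 - z2))" by (simp add: dist_norm norm_sc)
      also have "\<dots> \<le> cmod (n - m) * (norm (z1 - z2) / c)" by (intro mult_left_mono Rb) auto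
      finally show "dist (g z1) (g z2) \<le> q * dist z1 z2" by (simp add: q_def dist_norm)
    qed
    then obtain z where z: "g z = z" using banach_fix_type[OF q] by blast
    have "sc n (R z) - A (R z) = sc (n - m) (R z) + (sc m (R z) - A (R z))" by (simp add: sc_diff_left)
    also have "\<dots> = sc (n - m) (R z) + z" by (simp add: R(3))
    also have "\<dots> = y" using z unfolding g_def by (metis add.commute diff_add_cancel)
    finally show ?thesis using R(2) by blast
  qed
  have uniq: "x1 = x2" if "x1 \<in> D" "x2 \<in> D" "sc n x1 - A x1 = sc n x2 - A x2" for x1 x2
  proof -
    have "sc n (x1 - x2) - A (x1 - x2) = (sc n x1 - A x1) - (sc n x2 - A x2)"
      using that by (simp add: A_diff sc_diff algebra_simps)
    then have "sc n (x1 - x2) - A (x1 - x2) = 0" using that by simp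
    then have "c' * norm (x1 - x2) \<le> 0" using lown[OF D_diff[OF that(1,2)]] by simp
    then show ?thesis using c by (simp add: mult_le_0_iff)
  qed
  define S where "S y = (THE x. x \<in> D \<and> sc n x - A x = y)" for y
  have S: "S y \<in> D \<and> sc n (S y) - A (S y) = y" for y
    unfolding S_def by (rule theI') (use ex uniq in blast)
  have Sx: "S (sc n x - A x) = x" if "x \<in> D" for x
    using uniq[OF conjunct1[OF S] that] S by blast
  have "bounded_linear S"
  proof (rule bounded_linear_intro[of _ "1 / c'"])
    fix y1 y2
    have "S y1 + S y2 \<in> D" using S D_add by blast
    moreover have "sc n (S y1 + S y2) - A (S y1 + S y2) = y1 + y2"
      using S[of y1] S[of y2] by (simp add: A_add sc_add algebra_simps)
    ultimately show "S (y1 + y2) = S y1 + S y2" using Sx by metis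
  next
    fix r y
    have "r *\<^sub>R S y \<in> D" using S D_scaleR by blast
    moreover have "sc n (r *\<^sub>R S y) - A (r *\<^sub>R S y) = r *\<^sub>R y"
      using S[of y] by (simp add: A_scaleR sc_scaleR algebra_simps)
    ultimately show "S (r *\<^sub>R y) = r *\<^sub>R S y" using Sx by metis
  next
    fix y
    show "norm (S y) \<le> norm y * (1 / c')"
      using lown[of "S y"] S[of y] c by (simp add: field_simps mult.commute)
  qed
  then show ?thesis unfolding res_def using S Sx by blast
qed

lemma approx_eig:
  assumes l: "l \<in> frontier (op_spectrum sc D A)" and e: "e > 0"
  shows "\<exists>x\<in>D. norm x = 1 \<and> norm (sc l x - A x) < e"
proof (rule ccontr)
  assume "\<not> ?thesis"
  then have low1: "\<And>x. x \<in> D \<Longrightarrow> norm x = 1 \<Longrightarrow> e \<le> norm (sc l x - A x)" by force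
  have low: "e * norm x \<le> norm (sc l x - A x)" if x: "x \<in> D" for x
  proof (cases "x = 0")
    case True then show ?thesis by simp
  next
    case False
    define u where "u = (1 / norm x) *\<^sub>R x"
    have "u \<in> D" "norm u = 1" using D_scaleR[OF x] False by (auto simp: u_def)
    then have "e \<le> norm (sc l u - A u)" by (rule low1)
    also have "sc l u - A u = (1 / norm x) *\<^sub>R (sc l x - A x)"
      using x by (simp add: u_def A_scaleR sc_scaleR flip: scaleR_diff_right)
    also have "norm \<dots> = norm (sc l x - A x) / norm x" by simp
    finally show ?thesis using False by (simp add: field_simps)
  qed
  let ?S = "op_spectrum sc D A"
  have "l \<in> closure ?S" "l \<notin> interior ?S" using l by (auto simp: frontier_def)
  then obtain n where n: "n \<in> ?S" "dist n l < e / 4"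
    using e by (meson closure_approachable zero_less_divide_iff zero_less_numeral)
  obtain m where m: "m \<notin> ?S" "dist m l < e / 4"
  proof -
    have "\<not> ball l (e / 4) \<subseteq> ?S" using \<open>l \<notin> interior ?S\<close> e
      by (meson interior_maximal open_ball centre_in_ball zero_less_divide_iff zero_less_numeral subsetD)
    then obtain m' where "m' \<in> ball l (e / 4)" "m' \<notin> ?S" by blast
    then show ?thesis using that[of m'] by (auto simp: dist_commute)
  qed
  have lowm: "(3 * e / 4) * norm x \<le> norm (sc m x - A x)" if "x \<in> D" for x
  proof -
    have "(e - cmod (m - l)) * norm x \<le> norm (sc m x - A x)" by (rule lower_shift[OF low that])
    moreover have "(3 * e / 4) * norm x \<le> (e - cmod (m - l)) * norm x"
      using m(2) by (intro mult_right_mono) (auto simp: dist_norm)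
    ultimately show ?thesis by linarith
  qed
  have lown: "(3 * e / 4) * norm x \<le> norm (sc n x - A x)" if "x \<in> D" for x
  proof -
    have "(e - cmod (n - l)) * norm x \<le> norm (sc n x - A x)" by (rule lower_shift[OF low that])
    moreover have "(3 * e / 4) * norm x \<le> (e - cmod (n - l)) * norm x"
      using n(2) by (intro mult_right_mono) (auto simp: dist_norm)
    ultimately show ?thesis by linarith
  qed
  have "dist n m \<le> dist n l + dist m l" using dist_triangle[of n m l] by (simp add: dist_commute)
  then have "cmod (n - m) < 3 * e / 4"
    using n(2) m(2) e by (simp add: dist_norm)
  then have "res n"
    using res_near[OF _ lowm lown] m(1) e by (simp add: spec_iff)
  then show False using n(1) by (simp add: spec_iff)
qed

end



locale sgC = sg sc T D A for sc :: "complex \<Rightarrow> 'x::banach \<Rightarrow> 'x" and T D A +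
  fixes scY :: "complex \<Rightarrow> 'y::banach \<Rightarrow> 'y" and C :: "'x \<Rightarrow> 'y"
  assumes csY: "complex_structure scY"
    and C_add: "\<forall>x\<in>D. \<forall>y\<in>D. C (x + y) = C x + C y"
    and C_sc: "\<forall>a. \<forall>x\<in>D. C (sc a x) = scY a (C x)"
    and C_bnd: "\<exists>K. \<forall>x\<in>D. norm (C x) \<le> K * (norm x + norm (A x))"
begin

lemma D_zero: "0 \<in> D"
proof -
  have ev: "\<forall>\<^sub>F h in at_right 0. 0 = (1 / h) *\<^sub>R (T h 0 - 0)"
    using eventually_at_right_less[of 0] by eventually_elim (simp add: T_zero)
  have "((\<lambda>h. (1 / h) *\<^sub>R (T h 0 - 0)) \<longlongrightarrow> 0) (at_right 0)"
    by (rule Lim_transform_eventually[OF tendsto_const ev])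
  then show ?thesis by (rule D_I(1))
qed

lemma C_zero: "C 0 = 0" using C_add D_zero by (metis add_0 add_cancel_right_right)

lemma C_diff: "x \<in> D \<Longrightarrow> y \<in> D \<Longrightarrow> C (x - y) = C x - C y"
  using C_add D_diff by (metis add_diff_cancel diff_add_cancel)

lemma C_scaleR: "x \<in> D \<Longrightarrow> C (r *\<^sub>R x) = r *\<^sub>R C x"
  using C_sc sc_real csY unfolding complex_structure_def by metis

lemma C_cont: assumes x: "x \<in> D" shows "continuous_on {0..} (\<lambda>t. C (T t x))"
proof -
  obtain K0 where K0: "\<And>z. z \<in> D \<Longrightarrow> norm (C z) \<le> K0 * (norm z + norm (A z))" using C_bnd by blast
  define K where "K = max K0 1"
  have K: "\<And>z. z \<in> D \<Longrightarrow> norm (C z) \<le> K * (norm z + norm (A z))" "K > 0"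
    using K0 unfolding K_def by (smt (verit) max.cobounded1 mult_right_mono norm_ge_zero) auto
  show ?thesis unfolding continuous_on_eq_continuous_within continuous_within_eps_delta
  proof (intro ballI allI impI)
    fix s :: real and e :: real assume s: "s \<in> {0..}" and e: "e > 0"
    obtain d1 where d1: "d1 > 0" "\<And>t. t \<in> {0..} \<Longrightarrow> dist t s < d1 \<Longrightarrow> dist (T t x) (T s x) < e / (2 * K)"
      using T_cont[of s x] s e K(2) unfolding continuous_within_eps_delta by (metis atLeast_iff divide_pos_pos mult_pos_pos zero_less_numeral)
    obtain d2 where d2: "d2 > 0" "\<And>t. t \<in> {0..} \<Longrightarrow> dist t s < d2 \<Longrightarrow> dist (T t (A x)) (T s (A x)) < e / (2 * K)"
      using T_cont[of s "A x"] s e K(2) unfolding continuous_within_eps_delta by (metis atLeast_iff divide_pos_pos mult_pos_pos zero_less_numeral)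
    show "\<exists>d>0. \<forall>t\<in>{0..}. dist t s < d \<longrightarrow> dist (C (T t x)) (C (T s x)) < e"
    proof (intro exI[of _ "min d1 d2"] conjI ballI impI)
      fix t :: real assume t: "t \<in> {0..}" "dist t s < min d1 d2"
      have Dt: "T t x \<in> D" "T s x \<in> D" using D_T x t s by auto
      have "dist (C (T t x)) (C (T s x)) = norm (C (T t x - T s x))" using C_diff[OF Dt] by (simp add: dist_norm)
      also have "\<dots> \<le> K * (norm (T t x - T s x) + norm (A (T t x - T s x)))" by (rule K(1)[OF D_diff[OF Dt]])
      also have "A (T t x - T s x) = T t (A x) - T s (A x)" using A_diff[OF Dt] A_T x t s by simp
      also have "K * (norm (T t x - T s x) + norm (T t (A x) - T s (A x))) < K * (e / (2 * K) + e / (2 * K))"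
        using d1(2)[of t] d2(2)[of t] t K(2) by (intro mult_strict_left_mono add_strict_mono) (auto simp: dist_norm)
      also have "\<dots> = e" using K(2) by (simp add: field_simps)
      finally show "dist (C (T t x)) (C (T s x)) < e" .
    qed (use d1 d2 in auto)
  qed
qed

definition phi where "phi x t = ennreal ((norm (C (T (max 0 t) x)))\<^sup>2)"

lemma phi_meas: assumes "x \<in> D" shows "phi x \<in> borel_measurable borel"
proof -
  have "continuous_on UNIV (\<lambda>t. C (T (max 0 t) x))"
    by (rule continuous_on_compose2[OF C_cont[OF assms], of _ "\<lambda>t. max 0 t"]) (auto intro!: continuous_intros)
  then have [measurable]: "(\<lambda>t. C (T (max 0 t) x)) \<in> borel_measurable borel" by (rule borel_measurable_continuous_onI)
  show ?thesis unfolding phi_def by measurable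
qed

definition Sset where "Sset \<tau> = {t::real. 0 \<le> t \<and> ennreal t < \<tau>}"

lemma Sset_meas[measurable]: "Sset \<tau> \<in> sets borel"
  unfolding Sset_def by measurable

lemma E_eq: "obs_energy T C \<tau> x = (\<integral>\<^sup>+ t. phi x t * indicator (Sset \<tau>) t \<partial>lborel)"
  unfolding obs_energy_def
  by (intro nn_integral_cong) (auto simp: phi_def Sset_def indicator_def max_def)

end


context sgC begin

lemma phi_scale: "x \<in> D \<Longrightarrow> phi (r *\<^sub>R x) t = ennreal (r\<^sup>2) * phi x t"
  by (simp add: phi_def T_scaleR C_scaleR D_T power_mult_distrib flip: ennreal_mult)

lemma E_scale: assumes x: "x \<in> D"
  shows "obs_energy T C \<tau> (r *\<^sub>R x) = ennreal (r\<^sup>2) * obs_energy T C \<tau> x"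
proof -
  have [measurable]: "phi x \<in> borel_measurable borel" by (rule phi_meas[OF x])
  have "obs_energy T C \<tau> (r *\<^sub>R x) = (\<integral>\<^sup>+ t. ennreal (r\<^sup>2) * (phi x t * indicator (Sset \<tau>) t) \<partial>lborel)"
    unfolding E_eq by (simp add: phi_scale[OF x] mult.assoc)
  also have "\<dots> = ennreal (r\<^sup>2) * obs_energy T C \<tau> x"
    unfolding E_eq by (rule nn_integral_cmult) measurable
  finally show ?thesis .
qed

lemma E_zero: "obs_energy T C \<tau> 0 = 0"
  unfolding E_eq by (simp add: phi_def T_zero C_zero)

lemma E_le_M2: assumes y: "y \<in> D" shows "obs_energy T C \<tau> y \<le> M2 T D C \<tau> * ennreal ((norm y)\<^sup>2)"
proof (cases "y = 0")
  case True then show ?thesis by (simp add: E_zero)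
next
  case False
  define u where "u = (1 / norm y) *\<^sub>R y"
  have u: "u \<in> D" "norm u = 1" using D_scaleR[OF y] False by (auto simp: u_def)
  have yu: "y = norm y *\<^sub>R u" using False by (simp add: u_def)
  have "obs_energy T C \<tau> y = ennreal ((norm y)\<^sup>2) * obs_energy T C \<tau> u"
    by (subst yu) (rule E_scale[OF u(1)])
  also have "\<dots> \<le> ennreal ((norm y)\<^sup>2) * M2 T D C \<tau>"
    unfolding M2_def by (intro mult_left_mono SUP_upper) (use u in auto)
  finally show ?thesis by (simp add: mult.commute)
qed

lemma E_split: assumes x: "x \<in> D" and eta: "\<eta> > 0"
  shows "obs_energy T C \<tau> x \<le> obs_energy T C (ennreal \<eta>) x + obs_energy T C \<tau> (T \<eta> x)"
proof -
  have [measurable]: "phi x \<in> borel_measurable borel" by (rule phi_meas[OF x])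
  have [measurable]: "phi (T \<eta> x) \<in> borel_measurable borel" by (rule phi_meas[OF D_T[OF x]]) (use eta in auto)
  define S' where "S' = {t::real. \<eta> \<le> t \<and> ennreal t < \<tau>}"
  have [measurable]: "S' \<in> sets borel" unfolding S'_def by measurable
  have "obs_energy T C \<tau> x \<le> (\<integral>\<^sup>+ t. phi x t * indicator (Sset (ennreal \<eta>)) t + phi x t * indicator S' t \<partial>lborel)"
    unfolding E_eq
  proof (intro nn_integral_mono)
    fix t :: real
    show "phi x t * indicator (Sset \<tau>) t \<le> phi x t * indicator (Sset (ennreal \<eta>)) t + phi x t * indicator S' t"
      using eta by (cases "t < \<eta>") (auto simp: Sset_def S'_def indicator_def intro: ennreal_lessI)
  qed
  also have "\<dots> = obs_energy T C (ennreal \<eta>) x + (\<integral>\<^sup>+ t. phi x t * indicator S' t \<partial>lborel)"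
    unfolding E_eq by (rule nn_integral_add) measurable
  also have "(\<integral>\<^sup>+ t. phi x t * indicator S' t \<partial>lborel) = (\<integral>\<^sup>+ s. phi x (\<eta> + s) * indicator S' (\<eta> + s) \<partial>lborel)"
    using nn_integral_real_affine[of "\<lambda>t. phi x t * indicator S' t" 1 \<eta>] by simp
  also have "\<dots> \<le> obs_energy T C \<tau> (T \<eta> x)"
    unfolding E_eq
  proof (intro nn_integral_mono)
    fix s :: real
    show "phi x (\<eta> + s) * indicator S' (\<eta> + s) \<le> phi (T \<eta> x) s * indicator (Sset \<tau>) s"
    proof (cases "\<eta> + s \<in> S'")
      case True
      then have s: "0 \<le> s" "ennreal (\<eta> + s) < \<tau>" by (auto simp: S'_def)
      then have "ennreal s < \<tau>" using eta by (meson ennreal_leI le_add_same_cancel2 less_imp_le order.strict_trans1)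
      then have "s \<in> Sset \<tau>" using s by (simp add: Sset_def)
      moreover have "T (max 0 (\<eta> + s)) x = T (max 0 s) (T \<eta> x)"
        using s eta T_add[of s \<eta> x] by (simp add: max_def add.commute)
      ultimately show ?thesis using True by (simp add: phi_def)
    qed simp
  qed
  finally show ?thesis by (simp add: add_mono)
qed

end


context sgC begin

lemma obs_lower:
  assumes "BFC_system T D C"
  shows "\<exists>\<eta>>0. \<exists>c>0. \<forall>x\<in>D. norm x = 1 \<longrightarrow> c \<le> norm (T \<eta> x)"
proof -
  obtain \<eta> :: real and \<tau> where h: "0 < \<eta>" "ennreal \<eta> < \<tau>" "M2 T D C \<tau> < \<infinity>"
      "M2 T D C (ennreal \<eta>) < m2 T D C \<tau>"
    using assms unfolding BFC_system_def admissible_in_def exactly_observable_in_def by blast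
  show ?thesis
  proof (cases "\<exists>x0\<in>D. norm x0 = 1")
    case False
    then show ?thesis using h(1) by (intro exI[of _ \<eta>] conjI exI[of _ 1]) auto
  next
    case True
    then obtain x0 where x0: "x0 \<in> D" "norm x0 = 1" by blast
    define a where "a = M2 T D C (ennreal \<eta>)"
    define b where "b = m2 T D C \<tau>"
    define B where "B = M2 T D C \<tau>"
    have key: "b \<le> a + B * ennreal ((norm (T \<eta> x))\<^sup>2)" if x: "x \<in> D" "norm x = 1" for x
    proof -
      have "b \<le> obs_energy T C \<tau> x" unfolding b_def m2_def by (rule INF_lower) (use x in auto)
      also have "\<dots> \<le> obs_energy T C (ennreal \<eta>) x + obs_energy T C \<tau> (T \<eta> x)" by (rule E_split[OF x(1) h(1)])
      also have "\<dots> \<le> a + B * ennreal ((norm (T \<eta> x))\<^sup>2)"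
      proof (rule add_mono)
        show "obs_energy T C (ennreal \<eta>) x \<le> a" unfolding a_def M2_def by (rule SUP_upper) (use x in auto)
        show "obs_energy T C \<tau> (T \<eta> x) \<le> B * ennreal ((norm (T \<eta> x))\<^sup>2)"
          unfolding B_def by (rule E_le_M2[OF D_T[OF x(1)]]) (use h in auto)
      qed
      finally show ?thesis .
    qed
    have "b \<le> B"
    proof -
      have "b \<le> obs_energy T C \<tau> x0" unfolding b_def m2_def by (rule INF_lower) (use x0 in auto)
      also have "\<dots> \<le> B" unfolding B_def M2_def by (rule SUP_upper) (use x0 in auto)
      finally show ?thesis .
    qed
    have fin: "a < \<infinity>" "b < \<infinity>" "B < \<infinity>" using h \<open>b \<le> B\<close> by (auto simp: a_def b_def B_def)
    define a' where "a' = enn2real a"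
    define b' where "b' = enn2real b"
    define B' where "B' = enn2real B"
    have eqs: "a = ennreal a'" "b = ennreal b'" "B = ennreal B'"
      using fin by (auto simp: a'_def b'_def B'_def)
    have nn: "a' \<ge> 0" "b' \<ge> 0" "B' \<ge> 0" by (auto simp: a'_def b'_def B'_def)
    have ab: "a' < b'" using h(4) eqs nn unfolding a_def[symmetric] b_def[symmetric]
      by (metis ennreal_less_iff)
    have keyr: "b' \<le> a' + B' * (norm (T \<eta> x))\<^sup>2" if x: "x \<in> D" "norm x = 1" for x
    proof -
      have "ennreal b' \<le> ennreal a' + ennreal B' * ennreal ((norm (T \<eta> x))\<^sup>2)" using key[OF x] eqs by simp
      also have "\<dots> = ennreal (a' + B' * (norm (T \<eta> x))\<^sup>2)" using nn by (simp add: ennreal_mult)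
      finally have "ennreal b' \<le> ennreal (a' + B' * (norm (T \<eta> x))\<^sup>2)" .
      then show ?thesis using nn by (metis ennreal_le_iff add_nonneg_nonneg mult_nonneg_nonneg zero_le_power2)
    qed
    have Bpos: "B' > 0"
    proof (rule ccontr)
      assume "\<not> B' > 0" then have "B' = 0" using nn by simp
      then show False using keyr[OF x0] ab by simp
    qed
    define c where "c = sqrt ((b' - a') / B')"
    have "\<exists>c>0. \<forall>x\<in>D. norm x = 1 \<longrightarrow> c \<le> norm (T \<eta> x)"
    proof (intro exI[of _ c] conjI ballI impI)
      show "0 < c" using ab Bpos by (simp add: c_def)
      fix x assume x: "x \<in> D" "norm x = 1"
      have "(b' - a') / B' \<le> (norm (T \<eta> x))\<^sup>2" using keyr[OF x] Bpos by (simp add: field_simps)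
      then have "c \<le> sqrt ((norm (T \<eta> x))\<^sup>2)" unfolding c_def by (rule real_sqrt_le_mono)
      then show "c \<le> norm (T \<eta> x)" by simp
    qed
    then show ?thesis using h(1) by blast
  qed
qed

lemma approx_T:
  assumes l: "l \<in> frontier (op_spectrum sc D A)" and t: "t \<ge> 0" and d: "\<delta> > 0"
    and K: "\<And>s z. 0 \<le> s \<Longrightarrow> s \<le> t \<Longrightarrow> norm (T s z) \<le> K * norm z" and K0: "K \<ge> 0"
  shows "\<exists>x\<in>D. norm x = 1 \<and> norm (sc (exp (l * complex_of_real t)) (T t x) - x) < \<delta>"
proof -
  define Q where "Q = exp (\<bar>Re l\<bar> * t) * K * t"
  have Q: "Q \<ge> 0" using t K0 by (simp add: Q_def)
  obtain x where x: "x \<in> D" "norm x = 1" "norm (sc l x - A x) < \<delta> / (Q + 1)"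
    using approx_eig[OF l, of "\<delta> / (Q + 1)"] d Q by auto
  have "norm (sc (exp (l * complex_of_real t)) (T t x) - x) \<le> Q * norm (sc l x - A x)"
    using T_approx[OF x(1) t K] by (simp add: Q_def mult_ac)
  also have "\<dots> \<le> Q * (\<delta> / (Q + 1))" using x(3) Q by (intro mult_left_mono) auto
  also have "\<dots> < \<delta>" using Q d by (simp add: field_simps)
  finally show ?thesis using x by blast
qed

end



theorem corollary3p4:
  fixes scX :: "complex \<Rightarrow> 'x::banach \<Rightarrow> 'x"
    and scY :: "complex \<Rightarrow> 'y::banach \<Rightarrow> 'y"
    and T :: "real \<Rightarrow> 'x \<Rightarrow> 'x"
    and D :: "'x set"
    and A :: "'x \<Rightarrow> 'x"
    and C :: "'x \<Rightarrow> 'y"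
  assumes "complex_structure scX" and "complex_structure scY"
    and "C0_semigroup scX T"
    and "minus_generator T D A"
    and "\<forall>x\<in>D. \<forall>y\<in>D. C (x + y) = C x + C y"
    and "\<forall>a. \<forall>x\<in>D. C (scX a x) = scY a (C x)"
    and "\<exists>K. \<forall>x\<in>D. norm (C x) \<le> K * (norm x + norm (A x))"
    and "admissible T D C"
    and "BFC_system T D C"
  shows "bounded (Re ` frontier (op_spectrum scX D A))"
proof -
  interpret sgC scX T D A scY C
    by unfold_locales (use assms in auto)
  obtain \<eta> c where \<eta>: "\<eta> > 0" and c: "c > 0" and low: "\<And>x. x \<in> D \<Longrightarrow> norm x = 1 \<Longrightarrow> c \<le> norm (T \<eta> x)"
    using obs_lower[OF assms(9)] by blast
  obtain K\<eta> where K\<eta>: "K\<eta> \<ge> 1" "\<And>s z. 0 \<le> s \<Longrightarrow> s \<le> \<eta> \<Longrightarrow> norm (T s z) \<le> K\<eta> * norm z"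
    using T_bound[of \<eta>] by blast
  obtain K1 where K1: "K1 \<ge> 1" "\<And>s z. 0 \<le> s \<Longrightarrow> s \<le> 1 \<Longrightarrow> norm (T s z) \<le> K1 * norm z"
    using T_bound[of 1] by blast
  have bnds: "- ln K1 \<le> Re l \<and> Re l \<le> - ln c / \<eta>" if l: "l \<in> frontier (op_spectrum scX D A)" for l
  proof
    have "exp (Re l * \<eta>) * c \<le> 1 + \<delta>" if d: "\<delta> > 0" for \<delta>
    proof -
      have "\<exists>x\<in>D. norm x = 1 \<and> norm (scX (exp (l * complex_of_real \<eta>)) (T \<eta> x) - x) < \<delta>"
        by (rule approx_T[OF l less_imp_le[OF \<eta>] d K\<eta>(2)]) (use K\<eta>(1) in linarith)+
      then obtain x where x: "x \<in> D" "norm x = 1" "norm (scX (exp (l * complex_of_real \<eta>)) (T \<eta> x) - x) < \<delta>"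
        by blast
      have "exp (Re l * \<eta>) * c \<le> exp (Re l * \<eta>) * norm (T \<eta> x)" using low[OF x(1,2)] by simp
      also have "\<dots> = norm (scX (exp (l * complex_of_real \<eta>)) (T \<eta> x))" by (simp add: norm_sc)
      also have "\<dots> \<le> norm x + norm (scX (exp (l * complex_of_real \<eta>)) (T \<eta> x) - x)"
        by (rule norm_triangle_sub)
      also have "\<dots> \<le> 1 + \<delta>" using x by simp
      finally show ?thesis .
    qed
    then have "exp (Re l * \<eta>) * c \<le> 1" using field_le_epsilon[of "exp (Re l * \<eta>) * c" 1] by simp
    then have "exp (Re l * \<eta>) \<le> exp (- ln c)" using c by (simp add: exp_minus inverse_eq_divide le_divide_eq)
    then have "Re l * \<eta> \<le> - ln c" by simp
    then show "Re l \<le> - ln c / \<eta>" by (subst pos_le_divide_eq[OF \<eta>])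
  next
    have "1 \<le> exp (Re l) * K1 + \<delta>" if d: "\<delta> > 0" for \<delta>
    proof -
      have "\<exists>x\<in>D. norm x = 1 \<and> norm (scX (exp (l * complex_of_real 1)) (T 1 x) - x) < \<delta>"
        by (rule approx_T[OF l zero_le_one d K1(2)]) (use K1(1) in linarith)+
      then obtain x where x: "x \<in> D" "norm x = 1" "norm (scX (exp l) (T 1 x) - x) < \<delta>"
        by auto
      have "1 = norm x" using x by simp
      also have "\<dots> \<le> norm (scX (exp l) (T 1 x)) + norm (scX (exp l) (T 1 x) - x)"
        using norm_triangle_ineq[of "scX (exp l) (T 1 x)" "x - scX (exp l) (T 1 x)"]
        by (simp add: norm_minus_commute)
      also have "norm (scX (exp l) (T 1 x)) = exp (Re l) * norm (T 1 x)" by (simp add: norm_sc)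
      also have "\<dots> \<le> exp (Re l) * K1" using K1(2)[of 1 x] x by (intro mult_left_mono) auto
      finally show ?thesis using x(3) by linarith
    qed
    then have "1 \<le> exp (Re l) * K1" by (rule field_le_epsilon)
    then have "exp (- Re l) \<le> exp (ln K1)" using K1 by (simp add: exp_minus inverse_eq_divide divide_le_eq mult.commute)
    then show "- ln K1 \<le> Re l" by simp
  qed
  show ?thesis unfolding bounded_iff
  proof (intro exI ballI)
    fix r assume "r \<in> Re ` frontier (op_spectrum scX D A)"
    then obtain l where "l \<in> frontier (op_spectrum scX D A)" "r = Re l" by blast
    then have "- ln K1 \<le> r" "r \<le> - ln c / \<eta>" using bnds by auto
    moreover have "- ln c / \<eta> \<le> max \<bar>ln K1\<bar> \<bar>- ln c / \<eta>\<bar>"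
      by (rule max.coboundedI2) (rule abs_ge_self)
    moreover have "ln K1 \<le> max \<bar>ln K1\<bar> \<bar>- ln c / \<eta>\<bar>"
      by (rule max.coboundedI1) (rule abs_ge_self)
    ultimately have "r \<le> max \<bar>ln K1\<bar> \<bar>- ln c / \<eta>\<bar>" "- r \<le> max \<bar>ln K1\<bar> \<bar>- ln c / \<eta>\<bar>"
      by linarith+
    then show "norm r \<le> max \<bar>ln K1\<bar> \<bar>- ln c / \<eta>\<bar>" by (simp add: abs_le_iff)
  qed
qed



end
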